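(* Let $\mathbf{C}=\mathbf{C}_1\,\dot\cup\,\mathbf{C}_2$ and $\mathbf{B}=\mathbf{B}_+\,\dot\cup\,\mathbf{B}'\in\dot{\mathbb{P}}(\mathbb{L}(\mathbf{C}_1))$ with $|\mathbf{B}|=|\mathbf{C}_1|$, and suppose every $L\in\mathbf{B}_+$ has a positive monotonic effect on $D$ relative to $\mathbf{C}$. If for some tree $\mathfrak{T}$ on $\mathbf{B}_+$, some $\omega^*\in\Omega$ and some values $\mathbf{c}_2$ of $\mathbf{C}_2$, $$D_{\mathbf{B}=\mathbf{1},\mathbf{C}_2=\mathbf{c}_2}(\omega^* )-\sum_{L\in\mathbf{B}}D_{\mathbf{B}\setminus\{L\}=\mathbf{1},L=0,\mathbf{C}_2=\mathbf{c}_2}(\omega^* )+\sum_{\mathbf{E}\in\mathfrak{T}}D_{\mathbf{B}\setminus\mathbf{E}=\mathbf{1},\mathbf{E}=\mathbf{0},\mathbf{C}_2=\mathbf{c}_2}(\omega^* )>0,$$ then $\mathbf{B}$ is irreducible for $\mathcal{D}(\mathbf{C},\Omega)$.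
   Context: Events are binary random variables on a population $\Omega$; $\overline{X}=1-X$; $\mathbb{L}(\mathbf{C})=\mathbf{C}\cup\{\overline{X}:X\in\mathbf{C}\}$; $\dot{\mathbb{P}}(\mathbb{L}(\mathbf{C}))$ is the set of subsets of $\mathbb{L}(\mathbf{C})$ not containing both $X$ and $\overline{X}$; $(L)_{\mathbf{c}}$ is the value of literal $L$ under assignment $\mathbf{c}$; $\bigwedge(\mathbf{B})=\min_{L\in\mathbf{B}}L$. Potential outcomes $\mathcal{D}(\mathbf{C},\Omega)$: $D_{\mathbf{c}}(\omega)\in\{0,1\}$ for all $\omega$, $\mathbf{c}$. Since $|\mathbf{B}|=|\mathbf{C}_1|$, setting the literals of $\mathbf{B}$ determines an assignment to $\mathbf{C}_1$; e.g. $D_{\mathbf{B}\setminus\mathbf{E}=\mathbf{1},\mathbf{E}=\mathbf{0},\mathbf{C}_2=\mathbf{c}_2}$ sets the literals in $\mathbf{E}$ to 0, the other literals of $\mathbf{B}$ to 1 and $\mathbf{C}_2$ to $\mathbf{c}_2$. A literal $L\in\mathbb{L}(\mathbf{C})$ has a positive monotonic effect on $D$ relative to $\mathbf{C}$ if for all $\omega$ and all pairs of assignments $\mathbf{c},\mathbf{c}'$ differing only in the variable underlying $L$, with $(L)_{\mathbf{c}}=1$ and $(L)_{\mathbf{c}'}=0$, one has $D_{\mathbf{c}}(\omega)\ge D_{\mathbf{c}'}(\omega)$. A tree on a finite set $\mathbf{S}$ is a set $\mathfrak{T}$ of 2-element subsets (edges) of $\mathbf{S}$ with $|\mathfrak{T}|=|\mathbf{S}|-1$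 such that every two distinct elements of $\mathbf{S}$ are joined by a path of edges (when $|\mathbf{B}_+|\le1$ the tree is empty). A sufficient cause representation $(\mathbf{A},\mathfrak{B})$ for $\mathcal{D}(\mathbf{C},\Omega)$ is a tuple $\mathbf{A}=\langle A_1,\dots,A_p\rangle$ of binary random variables on $\Omega$ unaffected by interventions on $\mathbf{C}$ and $\mathfrak{B}=\langle\mathbf{B}_1,\dots,\mathbf{B}_p\rangle$, $\mathbf{B}_i\in\dot{\mathbb{P}}(\mathbb{L}(\mathbf{C}))$, with: $D_{\mathbf{c}}(\omega)=1$ iff some $j$ has $A_j(\omega)=1$ and $(\bigwedge(\mathbf{B}_j))_{\mathbf{c}}=1$. $\mathbf{B}$ is irreducible for $\mathcal{D}(\mathbf{C},\Omega)$ if in every such representation some $\mathbf{B}_i\supseteq\mathbf{B}$. *)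

theory Defs
  imports "HOL-Library.FuncSet"
begin

datatype 'v lit = Pos 'v | Neg 'v

fun lvar :: "'v lit \<Rightarrow> 'v" where
  "lvar (Pos x) = x" | "lvar (Neg x) = x"

fun lcompl :: "'v lit \<Rightarrow> 'v lit" where
  "lcompl (Pos x) = Neg x" | "lcompl (Neg x) = Pos x"

definition lits :: "'v set \<Rightarrow> 'v lit set" where
  "lits C = Pos ` C \<union> Neg ` C"

definition consistent_subsets :: "'v set \<Rightarrow> 'v lit set set" where
  "consistent_subsets C = {B. B \<subseteq> lits C \<and> (\<forall>x. \<not> (Pos x \<in> B \<and> Neg x \<in> B))}"

definition assignments :: "'v set \<Rightarrow> ('v \<Rightarrow> bool) set" where
  "assignments C = C \<rightarrow>\<^sub>E (UNIV :: bool set)"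

fun lval :: "'v lit \<Rightarrow> ('v \<Rightarrow> bool) \<Rightarrow> bool" where
  "lval (Pos x) c = c x" | "lval (Neg x) c = (\<not> c x)"

definition conj_val :: "'v lit set \<Rightarrow> ('v \<Rightarrow> bool) \<Rightarrow> bool" where
  "conj_val B c = (\<forall>L\<in>B. lval L c)"

text \<open>The assignment B\E = 1, E = 0, C2 = c2: each literal of B (one per variable of C1)
  is set to 1 unless it lies in E, where it is set to 0; variables of C2 get c2.\<close>
definition interv ::
  "'v set \<Rightarrow> 'v set \<Rightarrow> 'v lit set \<Rightarrow> 'v lit set \<Rightarrow> ('v \<Rightarrow> bool) \<Rightarrow> 'v \<Rightarrow> bool" where
  "interv C1 C2 B E c2 x =
     (if x \<in> C1 then (if Pos x \<in> B then Pos x \<notin> E else Neg x \<in> E)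
      else if x \<in> C2 then c2 x else undefined)"

definition pos_monotonic ::
  "'v set \<Rightarrow> 'w set \<Rightarrow> (('v \<Rightarrow> bool) \<Rightarrow> 'w \<Rightarrow> bool) \<Rightarrow> 'v lit \<Rightarrow> bool" where
  "pos_monotonic C \<Omega> D L =
    (\<forall>\<omega>\<in>\<Omega>. \<forall>c\<in>assignments C. \<forall>c'\<in>assignments C.
       (\<forall>y. y \<noteq> lvar L \<longrightarrow> c y = c' y) \<and> lval L c \<and> \<not> lval L c'
       \<longrightarrow> (D c' \<omega> \<longrightarrow> D c \<omega>))"

definition tree_on :: "'a set \<Rightarrow> 'a set set \<Rightarrow> bool" where
  "tree_on S T =
    ((\<forall>e\<in>T. e \<subseteq> S \<and> card e = 2) \<and> card T = card S - 1 \<and>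
     (\<forall>a\<in>S. \<forall>b\<in>S. a \<noteq> b \<longrightarrow> (a, b) \<in> {(x, y). {x, y} \<in> T}\<^sup>*))"

definition suff_cause_rep ::
  "'v set \<Rightarrow> 'w set \<Rightarrow> (('v \<Rightarrow> bool) \<Rightarrow> 'w \<Rightarrow> bool)
   \<Rightarrow> (('w \<Rightarrow> bool) \<times> 'v lit set) list \<Rightarrow> bool" where
  "suff_cause_rep C \<Omega> D R =
    ((\<forall>j<length R. snd (R ! j) \<in> consistent_subsets C) \<and>
     (\<forall>\<omega>\<in>\<Omega>. \<forall>c\<in>assignments C.
        D c \<omega> = (\<exists>j<length R. fst (R ! j) \<omega> \<and> conj_val (snd (R ! j)) c)))"

definition irreducible ::
  "'v set \<Rightarrow> 'w set \<Rightarrow> (('v \<Rightarrow> bool) \<Rightarrow> 'w \<Rightarrow> bool) \<Rightarrow> 'v lit set \<Rightarrow> bool" where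
  "irreducible C \<Omega> D B =
    (\<forall>R. suff_cause_rep C \<Omega> D R \<longrightarrow> (\<exists>i<length R. B \<subseteq> snd (R ! i)))"

end

theory Submission
  imports Defs
begin

lemma cross_edge:
  assumes "(a, b) \<in> r\<^sup>*" "a \<in> K" "b \<notin> K"
  shows "\<exists>x y. (x, y) \<in> r \<and> x \<in> K \<and> y \<notin> K"
  using assms
proof (induction rule: rtrancl_induct)
  case base then show ?case by simp
next
  case (step y z)
  then show ?case by (cases "y \<in> K") auto
qed

lemma tree_outside:
  assumes tr: "tree_on S T" and fin: "finite S"
  shows "\<And>K. card (S - K) = n \<Longrightarrow> K \<subseteq> S \<Longrightarrow> K \<noteq> {} \<Longrightarrow>
     n \<le> card {E\<in>T. \<not> E \<subseteq> K}"
proof (induction n)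
  case 0 then show ?case by simp
next
  case (Suc n K)
  have finT: "finite T"
  proof -
    have "T \<subseteq> Pow S" using tr unfolding tree_on_def by auto
    then show ?thesis using fin by (meson finite_Pow_iff finite_subset)
  qed
  have "S - K \<noteq> {}" using Suc.prems(1) by (metis Zero_neq_Suc card.empty)
  then obtain b where b: "b \<in> S - K" by blast
  obtain a where a: "a \<in> K" using Suc.prems(3) by auto
  have "(a, b) \<in> {(x, y). {x, y} \<in> T}\<^sup>*"
  proof -
    have "a \<in> S" "b \<in> S" "a \<noteq> b" using a b Suc.prems(2) by auto
    then show ?thesis using tr unfolding tree_on_def by blast
  qed
  then obtain x y where xy: "{x, y} \<in> T" "x \<in> K" "y \<notin> K"
    using cross_edge[of a b _ K] a b by blast
  have yS: "y \<in> S" using tr xy unfolding tree_on_def by blast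
  let ?K' = "insert y K"
  have c: "card (S - ?K') = n"
  proof -
    have "S - ?K' = (S - K) - {y}" by auto
    moreover have "y \<in> S - K" using yS xy(3) by auto
    ultimately show ?thesis using Suc.prems(1) fin by simp
  qed
  have IH: "n \<le> card {E\<in>T. \<not> E \<subseteq> ?K'}"
    using Suc.IH[OF c] Suc.prems yS by auto
  have sub: "{E\<in>T. \<not> E \<subseteq> ?K'} \<subset> {E\<in>T. \<not> E \<subseteq> K}"
  proof (rule psubsetI)
    show "{E\<in>T. \<not> E \<subseteq> ?K'} \<subseteq> {E\<in>T. \<not> E \<subseteq> K}" by blast
    have "{x, y} \<in> {E\<in>T. \<not> E \<subseteq> K}" using xy by simp
    moreover have "{x, y} \<notin> {E\<in>T. \<not> E \<subseteq> ?K'}" using xy by simp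
    ultimately show "{E\<in>T. \<not> E \<subseteq> ?K'} \<noteq> {E\<in>T. \<not> E \<subseteq> K}" by blast
  qed
  have "card {E\<in>T. \<not> E \<subseteq> ?K'} < card {E\<in>T. \<not> E \<subseteq> K}"
    by (rule psubset_card_mono[OF _ sub]) (use finT in simp)
  with IH show ?case by simp
qed

lemma tree_inside:
  assumes tr: "tree_on S T" and fin: "finite S" and K: "K \<subseteq> S" "K \<noteq> {}"
  shows "card {E\<in>T. E \<subseteq> K} + 1 \<le> card K"
proof -
  have finT: "finite T"
  proof -
    have "T \<subseteq> Pow S" using tr unfolding tree_on_def by auto
    then show ?thesis using fin by (meson finite_Pow_iff finite_subset)
  qed
  have o: "card (S - K) \<le> card {E\<in>T. \<not> E \<subseteq> K}"
    using tree_outside[OF tr fin refl K] .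
  have "card T = card {E\<in>T. E \<subseteq> K} + card {E\<in>T. \<not> E \<subseteq> K}"
    using finT by (subst card_Un_disjoint[symmetric]) (auto intro: arg_cong[where f=card])
  moreover have "card T = card S - 1" using tr unfolding tree_on_def by simp
  moreover have "card S = card K + card (S - K)"
    using K fin by (metis card_Diff_subset card_mono diff_add_inverse le_add_diff_inverse finite_subset)
  moreover have "card K \<ge> 1" using K fin
    by (metis One_nat_def Suc_leI card_gt_0_iff finite_subset)
  ultimately show ?thesis using o by linarith
qed


lemma interv_assign:
  assumes "C = C1 \<union> C2"
  shows "interv C1 C2 B E c2 \<in> assignments C"
  using assms unfolding assignments_def interv_def by auto

lemma interv_other:
  "y \<noteq> lvar L \<Longrightarrow> (L = Pos (lvar L) \<or> L = Neg (lvar L)) \<Longrightarrow>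
   interv C1 C2 B (insert L E) c2 y = interv C1 C2 B E c2 y"
  unfolding interv_def by (cases L) auto

lemma lval_interv:
  assumes "L \<in> B" "B \<in> consistent_subsets C1"
  shows "lval L (interv C1 C2 B E c2) = (L \<notin> E)"
proof (cases L)
  case (Pos x)
  with assms have "x \<in> C1" unfolding consistent_subsets_def lits_def by auto
  with Pos assms show ?thesis unfolding interv_def by auto
next
  case (Neg x)
  with assms have "x \<in> C1" "Pos x \<notin> B" unfolding consistent_subsets_def lits_def by auto
  with Neg assms show ?thesis unfolding interv_def by auto
qed

lemma mono_step:
  assumes pm: "pos_monotonic C \<Omega> D L" and "\<omega> \<in> \<Omega>" and "C = C1 \<union> C2"
    and "L \<in> B" "B \<in> consistent_subsets C1" "L \<notin> E"
    and "D (interv C1 C2 B (insert L E) c2) \<omega>"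
  shows "D (interv C1 C2 B E c2) \<omega>"
proof -
  have eq: "\<forall>y. y \<noteq> lvar L \<longrightarrow> interv C1 C2 B E c2 y = interv C1 C2 B (insert L E) c2 y"
  proof (intro allI impI)
    fix y assume "y \<noteq> lvar L"
    then show "interv C1 C2 B E c2 y = interv C1 C2 B (insert L E) c2 y"
      using interv_other[of y L] by (cases L) auto
  qed
  have l: "lval L (interv C1 C2 B E c2)" "\<not> lval L (interv C1 C2 B (insert L E) c2)"
    using lval_interv[OF assms(4,5)] assms(6) by auto
  have as: "interv C1 C2 B E c2 \<in> assignments C" "interv C1 C2 B (insert L E) c2 \<in> assignments C"
    using interv_assign[OF assms(3)] by auto
  show ?thesis
    using pm[unfolded pos_monotonic_def, rule_format, OF assms(2) as, OF conjI[OF eq conjI[OF l]]]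
      assms(7) by simp
qed

lemma sum_bool: "finite A \<Longrightarrow> (\<Sum>x\<in>A. (of_bool (P x) :: int)) = int (card {x\<in>A. P x})"
  by (simp add: of_bool_def sum.If_cases Int_def conj_commute)

theorem mainTheorem7:
  fixes C C1 C2 :: "'v set" and \<Omega> :: "'w set"
    and D :: "('v \<Rightarrow> bool) \<Rightarrow> 'w \<Rightarrow> bool"
    and B Bplus B' :: "'v lit set" and T :: "'v lit set set"
    and \<omega>s :: 'w and c2 :: "'v \<Rightarrow> bool"
  assumes "finite C" and "C = C1 \<union> C2" and "C1 \<inter> C2 = {}"
    and "B = Bplus \<union> B'" and "Bplus \<inter> B' = {}"
    and "B \<in> consistent_subsets C1" and "card B = card C1"
    and "\<forall>L\<in>Bplus. pos_monotonic C \<Omega> D L"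
    and "tree_on Bplus T" and "\<omega>s \<in> \<Omega>"
    and "(of_bool (D (interv C1 C2 B {} c2) \<omega>s) :: int)
         - (\<Sum>L\<in>B. of_bool (D (interv C1 C2 B {L} c2) \<omega>s))
         + (\<Sum>E\<in>T. of_bool (D (interv C1 C2 B E c2) \<omega>s)) > 0"
  shows "irreducible C \<Omega> D B"
proof -
  note a = assms
  have finC1: "finite C1" using a(1,2) by simp
  have Blits: "B \<subseteq> lits C1" using a(6) unfolding consistent_subsets_def by auto
  have "finite (lits C1)" using finC1 unfolding lits_def by simp
  then have finB: "finite B" using Blits by (rule finite_subset[rotated])
  have finBp: "finite Bplus" using finB a(4) by simp
  have "T \<subseteq> Pow Bplus" using a(9) unfolding tree_on_def by auto
  then have finT: "finite T" using finBp by (meson finite_Pow_iff finite_subset)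
  let ?I = "\<lambda>E. interv C1 C2 B E c2"
  have mono: "D (?I (insert L E)) \<omega>s \<Longrightarrow> D (?I E) \<omega>s" if "L \<in> Bplus" "L \<notin> E" for L E
  proof -
    assume d: "D (?I (insert L E)) \<omega>s"
    have p: "pos_monotonic C \<Omega> D L" and lb: "L \<in> B" using a(8) a(4) that(1) by auto
    show "D (?I E) \<omega>s" by (rule mono_step[OF p a(10) a(2) lb a(6) that(2) d])
  qed
  define K where "K = {L\<in>Bplus. D (?I {L}) \<omega>s}"
  have edge: "E \<subseteq> K" if "E \<in> T" "D (?I E) \<omega>s" for E
  proof
    fix u assume u: "u \<in> E"
    from that a(9) have "E \<subseteq> Bplus" "card E = 2" unfolding tree_on_def by auto
    then obtain p q where pq: "E = {p, q}" "p \<noteq> q" by (meson card_2_iff)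
    obtain v where v: "E = {u, v}" "u \<noteq> v" using pq u by auto
    have "v \<in> Bplus" "u \<in> Bplus" using v \<open>E \<subseteq> Bplus\<close> by auto
    have "insert v {u} = E" using v by auto
    then have "D (?I (insert v {u})) \<omega>s" using that(2) by simp
    moreover have "v \<notin> {u}" using v(2) by auto
    ultimately have "D (?I {u}) \<omega>s" using mono[of v "{u}"] \<open>v \<in> Bplus\<close> by simp
    then show "u \<in> K" using \<open>u \<in> Bplus\<close> K_def by simp
  qed
  have sT: "(\<Sum>E\<in>T. (of_bool (D (?I E) \<omega>s) :: int)) \<le> int (card {E\<in>T. E \<subseteq> K})"
  proof -
    have "{E\<in>T. D (?I E) \<omega>s} \<subseteq> {E\<in>T. E \<subseteq> K}" using edge by blast
    then have "card {E\<in>T. D (?I E) \<omega>s} \<le> card {E\<in>T. E \<subseteq> K}"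
      using finT by (intro card_mono) auto
    then show ?thesis using sum_bool[OF finT, of "\<lambda>E. D (?I E) \<omega>s"] by simp
  qed
  have sB: "(\<Sum>L\<in>B. (of_bool (D (?I {L}) \<omega>s) :: int)) \<ge> int (card K)"
  proof -
    have "(\<Sum>L\<in>B. (of_bool (D (?I {L}) \<omega>s) :: int)) = int (card {L\<in>B. D (?I {L}) \<omega>s})"
      using sum_bool[OF finB] .
    moreover have "card K \<le> card {L\<in>B. D (?I {L}) \<omega>s}"
      using finB a(4) unfolding K_def by (intro card_mono) auto
    ultimately show ?thesis by simp
  qed
  show ?thesis unfolding irreducible_def
  proof (intro allI impI, rule ccontr)
    fix R assume rep: "suff_cause_rep C \<Omega> D R" and no: "\<not> (\<exists>i<length R. B \<subseteq> snd (R ! i))"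
    show False
    proof (cases "D (?I {}) \<omega>s")
      case False
      have "K = {}"
      proof -
        have "\<not> D (?I {L}) \<omega>s" if "L \<in> Bplus" for L
          using mono[OF that, of "{}"] False by auto
        then show ?thesis unfolding K_def by auto
      qed
      then have e0: "{E\<in>T. E \<subseteq> K} = {}" using a(9) unfolding tree_on_def by force
      have "card {E\<in>T. E \<subseteq> K} = 0" by (simp only: e0 card.empty)
      moreover have "(of_bool (D (?I {}) \<omega>s)::int) = 0" using False by simp
      ultimately show False using sT sB a(11) by linarith
    next
      case True
      have "\<exists>L\<in>B. D (?I {L}) \<omega>s"
      proof -
        obtain j where j: "j < length R" "fst (R ! j) \<omega>s" "conj_val (snd (R ! j)) (?I {})"
          using rep[unfolded suff_cause_rep_def] True a(10) interv_assign[OF a(2)]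
          by metis
        obtain L where L: "L \<in> B" "L \<notin> snd (R ! j)" using no j(1) by auto
        have "conj_val (snd (R ! j)) (?I {L})"
          unfolding conj_val_def
        proof
          fix M assume M: "M \<in> snd (R ! j)"
          have Mt: "lval M (?I {})" using j(3) M unfolding conj_val_def by auto
          show "lval M (?I {L})"
          proof (cases "lvar M = lvar L")
            case False
            have "\<forall>y. y \<noteq> lvar L \<longrightarrow> ?I {L} y = ?I {} y"
            proof (intro allI impI)
              fix y assume "y \<noteq> lvar L"
              then show "?I {L} y = ?I {} y" using interv_other[of y L _ _ _ "{}"] by (cases L) auto
            qed
            then show ?thesis using Mt False by (cases M) auto
          next
            case True
            have "lval L (?I {})" using lval_interv[OF L(1) a(6)] by simp
            moreover have "M \<noteq> L" using L M by auto
            ultimately show ?thesis using Mt True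
              by (cases M; cases L) auto
          qed
        qed
        then have "D (?I {L}) \<omega>s"
          using rep[unfolded suff_cause_rep_def] j(1,2) a(10) interv_assign[OF a(2)] by metis
        then show ?thesis using L by blast
      qed
      then have ne: "{L\<in>B. D (?I {L}) \<omega>s} \<noteq> {}" by blast
      have "finite {L\<in>B. D (?I {L}) \<omega>s}" using finB by simp
      then have "card {L\<in>B. D (?I {L}) \<omega>s} \<ge> 1" using ne
        by (simp add: Suc_le_eq card_gt_0_iff)
      have "1 + int (card {E\<in>T. E \<subseteq> K}) \<le> (\<Sum>L\<in>B. (of_bool (D (?I {L}) \<omega>s) :: int))"
      proof (cases "K = {}")
        case True
        then have e0: "{E\<in>T. E \<subseteq> K} = {}" using a(9) unfolding tree_on_def by force
        have "card {E\<in>T. E \<subseteq> K} = 0" by (simp only: e0 card.empty)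
        then show ?thesis using sum_bool[OF finB, of "\<lambda>L. D (?I {L}) \<omega>s"]
          \<open>card {L\<in>B. D (?I {L}) \<omega>s} \<ge> 1\<close> by simp
      next
        case False
        have "card {E\<in>T. E \<subseteq> K} + 1 \<le> card K"
          using tree_inside[OF a(9) finBp _ False] K_def by auto
        then show ?thesis using sB by linarith
      qed
      then show False using sT a(11) True by simp
    qed
  qed
qed

end
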